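(* Let $G=(V,E,(p_{uv})_{(u,v)\in E})$ be an influence graph. For every partial realisation $\psi$, all partial realisations $\hat\psi,\hat\psi'$ with $\hat\psi\subseteq\hat\psi'$, and every $v\in V$, we have $\Delta^2_\psi(v\mid\hat\psi)\ge\Delta^2_\psi(v\mid\hat\psi')$ (the strong 2-level diffusion model is strongly adaptive submodular).
   Context: $G$ is a directed graph with activation probabilities $p_{uv}\in[0,1]$. $\mathbf L,\hat{\mathbf L}$ are independent random subsets of $E$, each containing every edge $(u,w)$ independently with probability $p_{uw}$. For $L\subseteq E$, $T\subseteq V$, $\sigma_L(T)$ is the number of nodes reachable by a directed path (length $\ge0$) in $(V,L)$ from $T$. For $T\subseteq V$, $\mathbf L^2(T):=\mathbf L\cup(\hat{\mathbf L}\cap\{(u,w)\in E:u\in T\})$. Realisations: $\Phi(u):=\{u\}\cup\{z:(u,z)\in\mathbf L\}$, $\hat\Phi(u):=\{u\}\cup\{z:(u,z)\in\hat{\mathbf L}\}$. A partial realisation $\psi$ is the restriction of $u\mapsto\{u\}\cup\{z:(u,z)\in L\}$ (for some $L\subseteq E$) to a set $dom(\psi)\subseteq V$; $\psi\subseteq\psi'$ means $dom(\psi)\subseteq dom(\psi')$ and they agree on $dom(\psi)$; $\psi\subseteq\Phi$ is the event $\Phi(u)=\psi(u)$ for all $u\in dom(\psi)$ (similarly for $\hat\Phi$). For $T\subseteq V$, $\sigma^2_{\mathbf L,\hat{\mathbf L},\psi}(T):=\sigma_{\mathbf L^2(T\setminus dom(\psi))}(T)$. Define $\Delta^2_\psi(v\mid\hat\psi):=\mathbb{E}\big[\sigma^2_{\mathbf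 L,\hat{\mathbf L},\psi}(\{v\}\cup dom(\psi)\cup dom(\hat\psi))-\sigma^2_{\mathbf L,\hat{\mathbf L},\psi}(dom(\psi)\cup dom(\hat\psi))\,\big|\,\psi\subseteq\Phi,\hat\psi\subseteq\hat\Phi\big]$ (conditional expectations are taken on events of positive probability). *)

theory Defs
  imports Complex_Main
begin

definition influence_graph :: "'a set \<Rightarrow> ('a \<times> 'a) set \<Rightarrow> ('a \<times> 'a \<Rightarrow> real) \<Rightarrow> bool" where
  "influence_graph V E p \<longleftrightarrow> finite V \<and> E \<subseteq> V \<times> V \<and> (\<forall>e\<in>E. 0 \<le> p e \<and> p e \<le> 1)"

(* probability that the random live-edge set equals L (each edge of E independently with prob. p) *)
definition edge_prob :: "('a \<times> 'a) set \<Rightarrow> ('a \<times> 'a \<Rightarrow> real) \<Rightarrow> ('a \<times> 'a) set \<Rightarrow> real" where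
  "edge_prob E p L = (\<Prod>e\<in>L. p e) * (\<Prod>e\<in>E - L. 1 - p e)"

definition realis :: "('a \<times> 'a) set \<Rightarrow> 'a \<Rightarrow> 'a set" where
  "realis L u = insert u {z. (u, z) \<in> L}"

(* event  psi \<subseteq> Phi  for the realisation induced by L *)
definition consistent :: "('a \<rightharpoonup> 'a set) \<Rightarrow> ('a \<times> 'a) set \<Rightarrow> bool" where
  "consistent \<psi> L \<longleftrightarrow> (\<forall>u\<in>dom \<psi>. \<psi> u = Some (realis L u))"

definition partial_realisation :: "'a set \<Rightarrow> ('a \<times> 'a) set \<Rightarrow> ('a \<rightharpoonup> 'a set) \<Rightarrow> bool" where
  "partial_realisation V E \<psi> \<longleftrightarrow> dom \<psi> \<subseteq> V \<and> (\<exists>L\<subseteq>E. consistent \<psi> L)"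

definition sigma :: "('a \<times> 'a) set \<Rightarrow> 'a set \<Rightarrow> nat" where
  "sigma L T = card ((L\<^sup>*) `` T)"

definition L2 :: "('a \<times> 'a) set \<Rightarrow> ('a \<times> 'a) set \<Rightarrow> ('a \<times> 'a) set \<Rightarrow> 'a set \<Rightarrow> ('a \<times> 'a) set" where
  "L2 E L Lh T = L \<union> (Lh \<inter> {(u, w). (u, w) \<in> E \<and> u \<in> T})"

definition sigma2 :: "('a \<times> 'a) set \<Rightarrow> ('a \<times> 'a) set \<Rightarrow> ('a \<times> 'a) set \<Rightarrow> ('a \<rightharpoonup> 'a set) \<Rightarrow> 'a set \<Rightarrow> nat" where
  "sigma2 E L Lh \<psi> T = sigma (L2 E L Lh (T - dom \<psi>)) T"

definition event_prob :: "('a \<times> 'a) set \<Rightarrow> ('a \<times> 'a \<Rightarrow> real) \<Rightarrow> ('a \<rightharpoonup> 'a set) \<Rightarrow> real" where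
  "event_prob E p \<psi> = (\<Sum>L\<in>Pow E. if consistent \<psi> L then edge_prob E p L else 0)"

(* Delta^2_psi(v | psih): conditional expectation given psi \<subseteq> Phi and psih \<subseteq> Phih,
   with L, Lh independent *)
definition Delta2 :: "('a \<times> 'a) set \<Rightarrow> ('a \<times> 'a \<Rightarrow> real) \<Rightarrow> ('a \<rightharpoonup> 'a set) \<Rightarrow> 'a \<Rightarrow> ('a \<rightharpoonup> 'a set) \<Rightarrow> real" where
  "Delta2 E p \<psi> v \<psi>h =
     (\<Sum>L\<in>Pow E. \<Sum>Lh\<in>Pow E.
        if consistent \<psi> L \<and> consistent \<psi>h Lh then
          edge_prob E p L * edge_prob E p Lh *
          (real (sigma2 E L Lh \<psi> (insert v (dom \<psi> \<union> dom \<psi>h)))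
           - real (sigma2 E L Lh \<psi> (dom \<psi> \<union> dom \<psi>h)))
        else 0)
     / (event_prob E p \<psi> * event_prob E p \<psi>h)"

end

theory Submission imports Defs begin

lemma sum_edge_prob: "finite X \<Longrightarrow> (\<Sum>M\<in>Pow X. edge_prob X p M) = 1"
  using prod_add[of X p "\<lambda>e. 1 - p e"] by (simp add: edge_prob_def)

lemma edge_prob_nonneg:
  assumes "\<forall>e\<in>E. 0 \<le> p e \<and> p e \<le> 1" "L \<subseteq> E"
  shows "0 \<le> edge_prob E p L"
  unfolding edge_prob_def using assms
  by (intro mult_nonneg_nonneg prod_nonneg) auto

lemma edge_prob_split:
  assumes "M1 \<subseteq> B" "M2 \<subseteq> E - B" "B \<subseteq> E" "finite E"
  shows "edge_prob E p (M1 \<union> M2) = edge_prob B p M1 * edge_prob (E - B) p M2"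
proof -
  have f: "finite M1" "finite M2" "finite (B - M1)" "finite (E - B - M2)"
    using assms finite_subset by (metis Diff_subset order_trans)+
  have e: "E - (M1 \<union> M2) = (B - M1) \<union> (E - B - M2)" using assms by auto
  have "(\<Prod>e\<in>M1 \<union> M2. p e) = (\<Prod>e\<in>M1. p e) * (\<Prod>e\<in>M2. p e)"
    using f assms by (intro prod.union_disjoint) auto
  moreover have "(\<Prod>e\<in>E - (M1 \<union> M2). 1 - p e) = (\<Prod>e\<in>B - M1. 1 - p e) * (\<Prod>e\<in>E - B - M2. 1 - p e)"
    unfolding e using f assms by (intro prod.union_disjoint) auto
  ultimately show ?thesis unfolding edge_prob_def by (simp add: algebra_simps)
qed

lemma sum_Pow_split:
  assumes "B \<subseteq> E"
  shows "(\<Sum>L\<in>Pow E. F L) = (\<Sum>M1\<in>Pow B. \<Sum>M2\<in>Pow (E - B). F (M1 \<union> M2))"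
proof -
  have bij: "bij_betw (\<lambda>(M1, M2). M1 \<union> M2) (Pow B \<times> Pow (E - B)) (Pow E)"
    by (rule bij_betw_byWitness[where f' = "\<lambda>L. (L \<inter> B, L - B)"]) (use assms in auto)
  show ?thesis
    by (subst sum.reindex_bij_betw[OF bij, symmetric]) (simp add: sum.cartesian_product split_beta)
qed

lemma indep_sum:
  assumes "finite E" "B \<subseteq> E"
    and g: "\<And>L. L \<subseteq> E \<Longrightarrow> g L = g (L - B)"
    and h: "\<And>L. L \<subseteq> E \<Longrightarrow> h L = h (L \<inter> B)"
  shows "(\<Sum>L\<in>Pow E. edge_prob E p L * (h L * g L)) =
    (\<Sum>M\<in>Pow B. edge_prob B p M * h M) * (\<Sum>M\<in>Pow (E - B). edge_prob (E - B) p M * g M)"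
proof -
  have "(\<Sum>L\<in>Pow E. edge_prob E p L * (h L * g L)) =
     (\<Sum>M1\<in>Pow B. \<Sum>M2\<in>Pow (E - B). edge_prob E p (M1 \<union> M2) * (h (M1 \<union> M2) * g (M1 \<union> M2)))"
    by (rule sum_Pow_split[OF assms(2)])
  also have "\<dots> = (\<Sum>M1\<in>Pow B. \<Sum>M2\<in>Pow (E - B). (edge_prob B p M1 * h M1) * (edge_prob (E - B) p M2 * g M2))"
  proof (intro sum.cong refl)
    fix M1 M2 assume m: "M1 \<in> Pow B" "M2 \<in> Pow (E - B)"
    have s: "M1 \<union> M2 \<subseteq> E" using m assms by auto
    have "(M1 \<union> M2) - B = M2" "(M1 \<union> M2) \<inter> B = M1" using m by auto
    then have "h (M1 \<union> M2) = h M1" "g (M1 \<union> M2) = g M2" using g[OF s] h[OF s] by auto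
    then show "edge_prob E p (M1 \<union> M2) * (h (M1 \<union> M2) * g (M1 \<union> M2)) =
      (edge_prob B p M1 * h M1) * (edge_prob (E - B) p M2 * g M2)"
      using edge_prob_split[of M1 B M2 E p] m assms by (simp add: algebra_simps)
  qed
  finally show ?thesis by (simp add: sum_product)
qed

definition Kset :: "'a set \<Rightarrow> ('a \<times> 'a) set \<Rightarrow> ('a \<times> 'a) set \<Rightarrow> 'a set \<Rightarrow> 'a set" where
  "Kset D Lh E T = T \<union> {w. \<exists>u\<in>T - D. (u, w) \<in> Lh \<and> (u, w) \<in> E}"

lemma reach_eq: "(L2 E L Lh (T - D))\<^sup>* `` T = L\<^sup>* `` Kset D Lh E T"
proof
  show "(L2 E L Lh (T - D))\<^sup>* `` T \<subseteq> L\<^sup>* `` Kset D Lh E T"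
  proof
    fix x assume "x \<in> (L2 E L Lh (T - D))\<^sup>* `` T"
    then obtain t where t: "t \<in> T" "(t, x) \<in> (L2 E L Lh (T - D))\<^sup>*" by auto
    from t(2) show "x \<in> L\<^sup>* `` Kset D Lh E T"
    proof (induction rule: rtrancl_induct)
      case base then show ?case using t(1) by (auto simp: Kset_def)
    next
      case (step y z)
      show ?case
      proof (cases "(y, z) \<in> L")
        case True then show ?thesis using step.IH by (auto intro: rtrancl_into_rtrancl)
      next
        case False
        then have "z \<in> Kset D Lh E T" using step.hyps(2) by (auto simp: L2_def Kset_def)
        then show ?thesis by auto
      qed
    qed
  qed
  show "L\<^sup>* `` Kset D Lh E T \<subseteq> (L2 E L Lh (T - D))\<^sup>* `` T"
  proof
    fix x assume "x \<in> L\<^sup>* `` Kset D Lh E T"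
    then obtain k where k: "k \<in> Kset D Lh E T" "(k, x) \<in> L\<^sup>*" by auto
    have sub: "L \<subseteq> L2 E L Lh (T - D)" by (auto simp: L2_def)
    have kx: "(k, x) \<in> (L2 E L Lh (T - D))\<^sup>*" using rtrancl_mono[OF sub] k(2) by auto
    show "x \<in> (L2 E L Lh (T - D))\<^sup>* `` T"
    proof (cases "k \<in> T")
      case True then show ?thesis using kx by auto
    next
      case False
      then obtain u where u: "u \<in> T - D" "(u, k) \<in> Lh" "(u, k) \<in> E" using k(1) by (auto simp: Kset_def)
      then have "(u, k) \<in> L2 E L Lh (T - D)" by (auto simp: L2_def)
      then have "(u, x) \<in> (L2 E L Lh (T - D))\<^sup>*" using kx by (rule converse_rtrancl_into_rtrancl)
      then show ?thesis using u by auto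
    qed
  qed
qed

lemma fin_reach: "finite L \<Longrightarrow> finite X \<Longrightarrow> finite (L\<^sup>* `` X)"
proof -
  assume a: "finite L" "finite X"
  have "L\<^sup>* `` X \<subseteq> X \<union> snd ` L"
  proof
    fix y assume "y \<in> L\<^sup>* `` X"
    then obtain x where x: "x \<in> X" "(x, y) \<in> L\<^sup>*" by blast
    from x(2) show "y \<in> X \<union> snd ` L"
    proof (cases rule: rtranclE)
      case base then show ?thesis using x(1) by simp
    next
      case (step z) then show ?thesis by force
    qed
  qed
  then show ?thesis using a finite_subset by blast
qed

lemma fin_K: "finite E \<Longrightarrow> finite T \<Longrightarrow> finite (Kset D Lh E T)"
proof -
  assume a: "finite E" "finite T"
  have "Kset D Lh E T \<subseteq> T \<union> snd ` E" by (force simp: Kset_def)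
  then show ?thesis using a finite_subset by blast
qed

lemma K_insert: "Kset D Lh E (insert v T) = Kset D Lh E T \<union> Kset D Lh E {v}"
  by (auto simp: Kset_def)

lemma K_mono: "T \<subseteq> T' \<Longrightarrow> Kset D Lh E T \<subseteq> Kset D Lh E T'"
  by (auto simp: Kset_def)

lemma sigma2_eq: "sigma2 E L Lh \<psi> T = card (L\<^sup>* `` Kset (dom \<psi>) Lh E T)"
  unfolding sigma2_def sigma_def by (simp add: reach_eq)

lemma card_diff_formula:
  assumes "finite X" "finite C"
  shows "real (card (X \<union> C)) - real (card X) = real (card (C - X))"
proof -
  have "card (X \<union> C) = card X + card (C - X)"
    using card_Un_disjoint[of X "C - X"] assms by (simp add: Un_Diff_cancel)
  then show ?thesis by simp
qed

lemma marg_formula: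
  assumes "finite E" "L \<subseteq> E" "finite T"
  shows "real (sigma2 E L Lh \<psi> (insert v T)) - real (sigma2 E L Lh \<psi> T)
     = real (card (L\<^sup>* `` Kset (dom \<psi>) Lh E {v} - L\<^sup>* `` Kset (dom \<psi>) Lh E T))"
proof -
  have fL: "finite L" using assms finite_subset by blast
  have f1: "finite (L\<^sup>* `` Kset (dom \<psi>) Lh E T)" by (rule fin_reach[OF fL fin_K[OF assms(1,3)]])
  have f2: "finite (L\<^sup>* `` Kset (dom \<psi>) Lh E {v})" by (rule fin_reach[OF fL fin_K[OF assms(1)]]) simp
  show ?thesis unfolding sigma2_eq
    by (subst K_insert, subst Image_Un, rule card_diff_formula[OF f1 f2])
qed

lemma marg_mono:
  assumes "finite E" "L \<subseteq> E" "finite T" "finite T'" "T \<subseteq> T'"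
  shows "real (sigma2 E L Lh \<psi> (insert v T')) - real (sigma2 E L Lh \<psi> T')
     \<le> real (sigma2 E L Lh \<psi> (insert v T)) - real (sigma2 E L Lh \<psi> T)"
proof -
  have fL: "finite L" using assms finite_subset by blast
  have "L\<^sup>* `` Kset (dom \<psi>) Lh E T \<subseteq> L\<^sup>* `` Kset (dom \<psi>) Lh E T'"
    using K_mono[OF assms(5), of "dom \<psi>" Lh E] by (rule Image_mono[OF order_refl])
  then have "card (L\<^sup>* `` Kset (dom \<psi>) Lh E {v} - L\<^sup>* `` Kset (dom \<psi>) Lh E T')
     \<le> card (L\<^sup>* `` Kset (dom \<psi>) Lh E {v} - L\<^sup>* `` Kset (dom \<psi>) Lh E T)"
    by (intro card_mono Diff_mono) (use fin_reach[OF fL fin_K[OF assms(1)]] in auto)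
  then show ?thesis unfolding marg_formula[OF assms(1-3)] marg_formula[OF assms(1,2,4)] by simp
qed

lemma marg_nonneg:
  assumes "finite E" "L \<subseteq> E" "finite T"
  shows "0 \<le> real (sigma2 E L Lh \<psi> (insert v T)) - real (sigma2 E L Lh \<psi> T)"
  unfolding marg_formula[OF assms] by simp

lemma sigma2_cong:
  assumes "\<And>u w. u \<in> T - dom \<psi> \<Longrightarrow> (u, w) \<in> E \<Longrightarrow> ((u, w) \<in> Lh \<longleftrightarrow> (u, w) \<in> Lh')"
  shows "sigma2 E L Lh \<psi> T = sigma2 E L Lh' \<psi> T"
proof -
  have "Lh \<inter> {(u, w). (u, w) \<in> E \<and> u \<in> T - dom \<psi>} = Lh' \<inter> {(u, w). (u, w) \<in> E \<and> u \<in> T - dom \<psi>}"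
  proof (intro set_eqI)
    fix x :: "'a \<times> 'a"
    show "x \<in> Lh \<inter> {(u, w). (u, w) \<in> E \<and> u \<in> T - dom \<psi>} \<longleftrightarrow> x \<in> Lh' \<inter> {(u, w). (u, w) \<in> E \<and> u \<in> T - dom \<psi>}"
      using assms[of "fst x" "snd x"] by (cases x) auto
  qed
  then have "L2 E L Lh (T - dom \<psi>) = L2 E L Lh' (T - dom \<psi>)"
    unfolding L2_def by simp
  then show ?thesis unfolding sigma2_def by simp
qed

lemma num_eq:
  fixes W :: "('a \<times> 'a) set \<Rightarrow> real" and f :: "('a \<times> 'a) set \<Rightarrow> ('a \<times> 'a) set \<Rightarrow> real"
  shows
  "(\<Sum>L\<in>Pow E. \<Sum>Lh\<in>Pow E. if consistent \<psi> L \<and> consistent h Lh then W L * W Lh * f L Lh else 0)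
   = (\<Sum>L\<in>Pow E. (if consistent \<psi> L then W L else 0) *
        (\<Sum>Lh\<in>Pow E. W Lh * ((if consistent h Lh then 1 else 0) * f L Lh)))"
proof (rule sum.cong[OF refl])
  fix L
  show "(\<Sum>Lh\<in>Pow E. if consistent \<psi> L \<and> consistent h Lh then W L * W Lh * f L Lh else 0)
   = (if consistent \<psi> L then W L else 0) *
        (\<Sum>Lh\<in>Pow E. W Lh * ((if consistent h Lh then 1 else 0) * f L Lh))"
  proof (cases "consistent \<psi> L")
    case True
    then show ?thesis unfolding sum_distrib_left by (intro sum.cong refl) simp
  qed simp
qed

lemma ev_eq:
  "event_prob E p h = (\<Sum>Lh\<in>Pow E. edge_prob E p Lh * ((if consistent h Lh then 1 else 0) * 1))"
  unfolding event_prob_def by (intro sum.cong refl) simp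

theorem lemma14:
  fixes V :: "'a set" and E :: "('a \<times> 'a) set" and p :: "'a \<times> 'a \<Rightarrow> real"
    and \<psi> \<psi>h \<psi>h' :: "'a \<rightharpoonup> 'a set" and v :: 'a
  assumes "influence_graph V E p"
    and "partial_realisation V E \<psi>"
    and "partial_realisation V E \<psi>h"
    and "partial_realisation V E \<psi>h'"
    and "\<psi>h \<subseteq>\<^sub>m \<psi>h'"
    and "v \<in> V"
    and "event_prob E p \<psi> > 0"
    and "event_prob E p \<psi>h > 0"
    and "event_prob E p \<psi>h' > 0"
  shows "Delta2 E p \<psi> v \<psi>h \<ge> Delta2 E p \<psi> v \<psi>h'"
proof -
  have finV: "finite V" and EV: "E \<subseteq> V \<times> V" and pr: "\<forall>e\<in>E. 0 \<le> p e \<and> p e \<le> 1"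
    using assms(1) by (auto simp: influence_graph_def)
  have finE: "finite E" using finV EV finite_subset by blast
  define D where "D = dom \<psi>"
  define A where "A = dom \<psi>h"
  define A' where "A' = dom \<psi>h'"
  have finD: "finite D" using assms(2) finV finite_subset unfolding D_def partial_realisation_def by blast
  have finA: "finite A" using assms(3) finV finite_subset unfolding A_def partial_realisation_def by blast
  have finA': "finite A'" using assms(4) finV finite_subset unfolding A'_def partial_realisation_def by blast
  have AA': "A \<subseteq> A'" using assms(5) unfolding A_def A'_def by (rule map_le_implies_dom_le)
  have agree: "\<And>u. u \<in> A \<Longrightarrow> \<psi>h' u = \<psi>h u" using assms(5) unfolding A_def map_le_def by auto
  define W where "W = edge_prob E p"
  have Wnn: "\<And>L. L \<in> Pow E \<Longrightarrow> 0 \<le> W L" unfolding W_def using edge_prob_nonneg[OF pr] by auto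
  define fS where "fS = (\<lambda>L Lh. real (sigma2 E L Lh \<psi> (insert v (D \<union> A))) - real (sigma2 E L Lh \<psi> (D \<union> A)))"
  define fS' where "fS' = (\<lambda>L Lh. real (sigma2 E L Lh \<psi> (insert v (D \<union> A'))) - real (sigma2 E L Lh \<psi> (D \<union> A')))"
  define c where "c = (\<lambda>L. if consistent \<psi> L then W L else 0)"
  have cnn: "\<And>L. L \<in> Pow E \<Longrightarrow> 0 \<le> c L" unfolding c_def using Wnn by auto
  define J where "J = (\<lambda>h (f :: ('a \<times> 'a) set \<Rightarrow> ('a \<times> 'a) set \<Rightarrow> real) (L :: ('a \<times> 'a) set). \<Sum>Lh\<in>Pow E. W Lh * ((if consistent h Lh then 1 else 0) * f L Lh))"
  have D1: "Delta2 E p \<psi> v \<psi>h = (\<Sum>L\<in>Pow E. c L * J \<psi>h fS L) / (event_prob E p \<psi> * event_prob E p \<psi>h)"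
    unfolding Delta2_def c_def J_def fS_def D_def A_def W_def by (subst num_eq) (rule refl)
  have D2: "Delta2 E p \<psi> v \<psi>h' = (\<Sum>L\<in>Pow E. c L * J \<psi>h' fS' L) / (event_prob E p \<psi> * event_prob E p \<psi>h')"
    unfolding Delta2_def c_def J_def fS'_def D_def A'_def W_def by (subst num_eq) (rule refl)
  have fS_nn: "\<And>L Lh. L \<in> Pow E \<Longrightarrow> 0 \<le> fS L Lh"
    unfolding fS_def using marg_nonneg[OF finE _ finite_UnI[OF finD finA]] by blast
  have fS'_le: "\<And>L Lh. L \<in> Pow E \<Longrightarrow> fS' L Lh \<le> fS L Lh"
    unfolding fS_def fS'_def
    using marg_mono[OF finE _ finite_UnI[OF finD finA] finite_UnI[OF finD finA'] Un_mono[OF order_refl AA']] by blast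
  have den1: "0 < event_prob E p \<psi> * event_prob E p \<psi>h" using assms(7,8) by simp
  have den2: "0 < event_prob E p \<psi> * event_prob E p \<psi>h'" using assms(7,9) by simp
  have J_nn: "\<And>h L. L \<in> Pow E \<Longrightarrow> 0 \<le> J h fS L"
    unfolding J_def using Wnn fS_nn by (intro sum_nonneg) auto
  have Delta1_nn: "0 \<le> Delta2 E p \<psi> v \<psi>h"
    unfolding D1 by (intro divide_nonneg_nonneg sum_nonneg mult_nonneg_nonneg) (use cnn J_nn assms(7,8) in auto)
  show ?thesis
  proof (cases "v \<in> D \<union> A'")
    case True
    then have "\<And>L Lh. fS' L Lh = 0" unfolding fS'_def by (simp add: insert_absorb)
    then have "Delta2 E p \<psi> v \<psi>h' = 0" unfolding D2 J_def by simp
    then show ?thesis using Delta1_nn by simp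
  next
    case False
    define B where "B = {(u, w). (u, w) \<in> E \<and> u \<in> A' - A}"
    have BE: "B \<subseteq> E" unfolding B_def by auto
    define \<psi>r where "\<psi>r = \<psi>h' |` (A' - A)"
    have dr: "dom \<psi>r = A' - A" unfolding \<psi>r_def A'_def by auto
    have rr: "\<And>u. u \<in> A' - A \<Longrightarrow> \<psi>r u = \<psi>h' u" by (simp add: \<psi>r_def)
    have cons_split: "\<And>Lh. consistent \<psi>h' Lh \<longleftrightarrow> consistent \<psi>r Lh \<and> consistent \<psi>h Lh"
    proof -
      fix Lh
      have "(\<forall>u\<in>A'. \<psi>h' u = Some (realis Lh u)) \<longleftrightarrow>
          (\<forall>u\<in>A' - A. \<psi>r u = Some (realis Lh u)) \<and> (\<forall>u\<in>A. \<psi>h u = Some (realis Lh u))"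
      proof safe
        fix u assume "\<forall>u\<in>A'. \<psi>h' u = Some (realis Lh u)" "u \<in> A'" "u \<notin> A"
        then show "\<psi>r u = Some (realis Lh u)" using rr by simp
      next
        fix u assume "\<forall>u\<in>A'. \<psi>h' u = Some (realis Lh u)" "u \<in> A"
        then show "\<psi>h u = Some (realis Lh u)" using agree[of u] AA' by auto
      next
        fix u assume "\<forall>u\<in>A' - A. \<psi>r u = Some (realis Lh u)" "\<forall>u\<in>A. \<psi>h u = Some (realis Lh u)" "u \<in> A'"
        then show "\<psi>h' u = Some (realis Lh u)" using agree[of u] rr[of u] by (cases "u \<in> A") auto
      qed
      then show "consistent \<psi>h' Lh \<longleftrightarrow> consistent \<psi>r Lh \<and> consistent \<psi>h Lh"
        unfolding consistent_def dr A_def[symmetric] A'_def[symmetric] .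
    qed
    have rl: "\<And>Lh u. u \<in> A \<Longrightarrow> realis (Lh - B) u = realis Lh u" unfolding realis_def B_def by auto
    have cB: "\<And>Lh. consistent \<psi>h (Lh - B) = consistent \<psi>h Lh"
      unfolding consistent_def A_def[symmetric] using rl by simp
    have fB: "\<And>L Lh. fS L (Lh - B) = fS L Lh"
    proof -
      fix L Lh
      have "\<And>T. T - D \<subseteq> insert v A \<Longrightarrow> sigma2 E L (Lh - B) \<psi> T = sigma2 E L Lh \<psi> T"
        by (rule sigma2_cong) (use False in \<open>auto simp: B_def D_def\<close>)
      moreover have "insert v (D \<union> A) - D \<subseteq> insert v A" "D \<union> A - D \<subseteq> insert v A" by auto
      ultimately show "fS L (Lh - B) = fS L Lh" unfolding fS_def by simp
    qed
    have g_dep: "\<And>L Lh. (if consistent \<psi>h Lh then 1 else 0) * fS L Lh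
        = (if consistent \<psi>h (Lh - B) then 1 else 0) * fS L (Lh - B)"
      using cB fB by simp
    have g0_dep: "\<And>Lh. (if consistent \<psi>h Lh then 1 else (0::real)) * 1
        = (if consistent \<psi>h (Lh - B) then 1 else 0) * 1"
      using cB by simp
    have h_dep: "\<And>Lh. Lh \<subseteq> E \<Longrightarrow> (if consistent \<psi>r Lh then 1 else (0::real))
        = (if consistent \<psi>r (Lh \<inter> B) then 1 else 0)"
    proof -
      fix Lh :: "('a \<times> 'a) set" assume "Lh \<subseteq> E"
      then have "\<And>u. u \<in> A' - A \<Longrightarrow> realis (Lh \<inter> B) u = realis Lh u"
        unfolding realis_def B_def by auto
      then have "consistent \<psi>r (Lh \<inter> B) = consistent \<psi>r Lh" unfolding consistent_def dr by simp
      then show "(if consistent \<psi>r Lh then 1 else (0::real)) = (if consistent \<psi>r (Lh \<inter> B) then 1 else 0)" by simp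
    qed
    define Q where "Q = (\<Sum>M\<in>Pow B. edge_prob B p M * (if consistent \<psi>r M then 1 else 0))"
    have one: "(\<Sum>M\<in>Pow B. edge_prob B p M * 1) = 1"
      using sum_edge_prob[of B p] finite_subset[OF BE finE] by simp
    have JQ: "\<And>L. J \<psi>h' fS L = Q * J \<psi>h fS L"
    proof -
      fix L
      define g where "g = (\<lambda>Lh. (if consistent \<psi>h Lh then 1 else 0) * fS L Lh)"
      have "J \<psi>h' fS L = (\<Sum>Lh\<in>Pow E. W Lh * ((if consistent \<psi>r Lh then 1 else 0) * g Lh))"
        unfolding J_def g_def using cons_split by (intro sum.cong refl) simp
      also have "\<dots> = Q * (\<Sum>M\<in>Pow (E - B). edge_prob (E - B) p M * g M)"
        unfolding W_def Q_def
        by (rule indep_sum[OF finE BE]) (unfold g_def, rule g_dep, rule h_dep, assumption)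
      also have "(\<Sum>M\<in>Pow (E - B). edge_prob (E - B) p M * g M) = J \<psi>h fS L"
      proof -
        have "J \<psi>h fS L = (\<Sum>Lh\<in>Pow E. W Lh * (1 * g Lh))" unfolding J_def g_def by simp
        also have "\<dots> = (\<Sum>M\<in>Pow B. edge_prob B p M * 1) * (\<Sum>M\<in>Pow (E - B). edge_prob (E - B) p M * g M)"
          unfolding W_def
          by (rule indep_sum[OF finE BE]) (unfold g_def, rule g_dep, rule refl)
        finally show ?thesis using one by simp
      qed
      finally show "J \<psi>h' fS L = Q * J \<psi>h fS L" .
    qed
    have PQ: "event_prob E p \<psi>h' = Q * event_prob E p \<psi>h"
    proof -
      define g where "g = (\<lambda>Lh. (if consistent \<psi>h Lh then 1 else (0::real)) * 1)"
      have "event_prob E p \<psi>h' = (\<Sum>Lh\<in>Pow E. W Lh * ((if consistent \<psi>r Lh then 1 else 0) * g Lh))"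
        unfolding ev_eq W_def g_def using cons_split by (intro sum.cong refl) simp
      also have "\<dots> = Q * (\<Sum>M\<in>Pow (E - B). edge_prob (E - B) p M * g M)"
        unfolding W_def Q_def
        by (rule indep_sum[OF finE BE]) (unfold g_def, rule g0_dep, rule h_dep, assumption)
      also have "(\<Sum>M\<in>Pow (E - B). edge_prob (E - B) p M * g M) = event_prob E p \<psi>h"
      proof -
        have "event_prob E p \<psi>h = (\<Sum>Lh\<in>Pow E. W Lh * (1 * g Lh))" unfolding ev_eq W_def g_def by simp
        also have "\<dots> = (\<Sum>M\<in>Pow B. edge_prob B p M * 1) * (\<Sum>M\<in>Pow (E - B). edge_prob (E - B) p M * g M)"
          unfolding W_def
          by (rule indep_sum[OF finE BE]) (unfold g_def, rule g0_dep, rule refl)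
        finally show ?thesis using one by simp
      qed
      finally show ?thesis .
    qed
    have Qnz: "Q \<noteq> 0" using PQ assms(9) by auto
    have "Delta2 E p \<psi> v \<psi>h' \<le> (\<Sum>L\<in>Pow E. c L * J \<psi>h' fS L) / (event_prob E p \<psi> * event_prob E p \<psi>h')"
      unfolding D2
    proof (intro divide_right_mono sum_mono mult_left_mono)
      fix L assume L: "L \<in> Pow E"
      show "J \<psi>h' fS' L \<le> J \<psi>h' fS L" unfolding J_def
        using Wnn fS'_le[OF L] by (intro sum_mono mult_left_mono) auto
      show "0 \<le> c L" using cnn L .
    qed (rule less_imp_le[OF den2])
    also have "\<dots> = (Q * (\<Sum>L\<in>Pow E. c L * J \<psi>h fS L)) / (Q * (event_prob E p \<psi> * event_prob E p \<psi>h))"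
    proof -
      have "(\<Sum>L\<in>Pow E. c L * (Q * J \<psi>h fS L)) = Q * (\<Sum>L\<in>Pow E. c L * J \<psi>h fS L)"
        by (simp add: sum_distrib_left mult.left_commute)
      moreover have "event_prob E p \<psi> * (Q * event_prob E p \<psi>h) = Q * (event_prob E p \<psi> * event_prob E p \<psi>h)"
        by (simp add: mult.left_commute)
      ultimately show ?thesis unfolding JQ PQ by simp
    qed
    also have "\<dots> = Delta2 E p \<psi> v \<psi>h" unfolding D1 using Qnz by simp
    finally show ?thesis .
  qed
qed

end
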